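(* Let $\alpha\in(1,2)$ and let $L$ be slowly varying at $\infty$ and bounded away from $0$ and $\infty$ on every compact interval of $[0,\infty)$. Let $(\xi_i)_{i\ge1}$ be i.i.d. real random variables distributed as $\xi$, with \[\mathbf{P}(|\xi|\geq t)\leq t^{-\alpha}L(t)\qquad\forall t\geq 1,\] and let $g$ be any non-decreasing asymptotic inverse of $t\mapsto t^\alpha/L(t)$; set $a_n=g(n)$. Then for every $\rho<\alpha$ there is a constant $C_\rho<\infty$ such that \[\mathbf{P}\left(\left|\sum_{i=1}^n\frac{\xi_i-\mathbf{E}[\xi_i]}{a_n}\right|>\lambda\right)\leq C_\rho\lambda^{-\rho}\qquad\text{for all } n\ge1,\ \lambda\ge1.\] In particular, with $S_n=\sum_{i=1}^n\xi_i$, the sequence $\left(|S_n-n\mathbf{E}[\xi]|/a_n\right)_{n\ge1}$ is tight.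
   Context: A positive measurable function $L$ is slowly varying at $\infty$ if $L(ts)/L(t)\to1$ as $t\to\infty$ for every $s>0$. A function $f$ is regularly varying with index $\alpha$ if $f(t)=t^\alpha L(t)$ with $L$ slowly varying. If $f$ is regularly varying with index $\alpha>0$, an asymptotic inverse of $f$ is a positive measurable function $g$ (regularly varying with index $1/\alpha$) with $f(g(t))\sim g(f(t))\sim t$ as $t\to\infty$; such $g$ exists, is asymptotically unique and can be chosen non-decreasing. *)

theory Defs
  imports "HOL-Probability.Probability" "HOL-Library.Landau_Symbols"
begin

definition slowly_varying :: "(real \<Rightarrow> real) \<Rightarrow> bool" where
  "slowly_varying L \<longleftrightarrow> L \<in> borel_measurable borel \<and> (\<forall>t>0. L t > 0) \<and>
     (\<forall>s>0. ((\<lambda>t. L (t * s) / L t) \<longlongrightarrow> 1) at_top)"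

definition asymptotic_inverse :: "(real \<Rightarrow> real) \<Rightarrow> (real \<Rightarrow> real) \<Rightarrow> bool" where
  "asymptotic_inverse f g \<longleftrightarrow> g \<in> borel_measurable borel \<and> (\<forall>t>0. g t > 0) \<and>
     (\<lambda>t. f (g t)) \<sim>[at_top] (\<lambda>t. t) \<and> (\<lambda>t. g (f t)) \<sim>[at_top] (\<lambda>t. t)"

definition locally_bounded_away :: "(real \<Rightarrow> real) \<Rightarrow> bool" where
  "locally_bounded_away L \<longleftrightarrow>
     (\<forall>T\<ge>0. \<exists>c>0. \<exists>C. \<forall>t\<in>{0..T}. c \<le> L t \<and> L t \<le> C)"

end

theory Submission
  imports Defs
begin

lemma sv_h_lim:
  assumes sv: "slowly_varying L"
  shows "((\<lambda>y. ln (L (exp (y + w))) - ln (L (exp y))) \<longlongrightarrow> 0) at_top"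
proof -
  have pos: "\<And>t. t > 0 \<Longrightarrow> L t > 0" using sv unfolding slowly_varying_def by auto
  have "((\<lambda>t. L (t * exp w) / L t) \<longlongrightarrow> 1) at_top"
    using sv unfolding slowly_varying_def by auto
  then have "((\<lambda>y. L (exp y * exp w) / L (exp y)) \<longlongrightarrow> 1) at_top"
    by (rule filterlim_compose) (rule exp_at_top)
  then have "((\<lambda>y. ln (L (exp y * exp w) / L (exp y))) \<longlongrightarrow> ln 1) at_top"
    by (intro tendsto_ln) auto
  moreover have "L (exp y * exp w) \<noteq> 0 \<and> L (exp y) \<noteq> 0" for y
  proof -
    have "L (exp y * exp w) > 0" "L (exp y) > 0" using pos by auto
    then show ?thesis by auto
  qed
  ultimately show ?thesis
    by (simp add: exp_add ln_div)
qed

lemma UCT_h: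
  assumes sv: "slowly_varying L" and e: "e > 0"
  shows "\<exists>X. \<forall>x\<ge>X. \<forall>v\<in>{0..1}. \<bar>ln (L (exp (x + v))) - ln (L (exp x))\<bar> \<le> e"
proof (rule ccontr)
  define h where "h x = ln (L (exp x))" for x
  have Lm[measurable]: "L \<in> borel_measurable borel" using sv unfolding slowly_varying_def by auto
  have hm[measurable]: "h \<in> borel_measurable borel" unfolding h_def by measurable
  assume "\<not> ?thesis"
  then have "\<forall>X. \<exists>x\<ge>X. \<exists>v\<in>{0..1}. \<bar>h (x + v) - h x\<bar> > e"
    by (auto simp: h_def not_le)
  then have "\<forall>n::nat. \<exists>p. fst p \<ge> real n \<and> snd p \<in> {0..1::real} \<and> \<bar>h (fst p + snd p) - h (fst p)\<bar> > e"
    by fastforce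
  then obtain P where P: "\<forall>n::nat. fst (P n) \<ge> real n \<and> snd (P n) \<in> {0..1::real} \<and> \<bar>h (fst (P n) + snd (P n)) - h (fst (P n))\<bar> > e"
    using choice[of "\<lambda>n p. fst p \<ge> real n \<and> snd p \<in> {0..1::real} \<and> \<bar>h (fst p + snd p) - h (fst p)\<bar> > e"] by blast
  define xs where "xs n = fst (P n)" for n
  define vs where "vs n = snd (P n)" for n
  have xs: "\<And>n. xs n \<ge> real n" and vs: "\<And>n. vs n \<in> {0..1}"
     and big: "\<And>n. \<bar>h (xs n + vs n) - h (xs n)\<bar> > e"
    using P by (auto simp: xs_def vs_def)
  define q where "q y w = indicator {-1..2::real} w * (if \<bar>h (y + w) - h y\<bar> \<ge> e/2 then 1 else 0::real)" for y w
  define I where "I y = (\<integral>w. q y w \<partial>lborel)" for y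
  have qm[measurable]: "q y \<in> borel_measurable borel" for y
    unfolding q_def by measurable
  have qb: "norm (q y w) \<le> indicator {-1..2::real} w" for y w
    by (auto simp: q_def indicator_def)
  have intI: "integrable lborel (indicator {-1..2::real} :: real \<Rightarrow> real)"
    by (auto intro!: integrable_real_indicator)
  have A: "(\<lambda>n. I (ys n)) \<longlonglongrightarrow> 0" if ys: "filterlim ys at_top sequentially" for ys
  proof -
    have "(\<lambda>n. \<integral>w. q (ys n) w \<partial>lborel) \<longlonglongrightarrow> (\<integral>w. (0::real) \<partial>(lborel::real measure))"
    proof (rule integral_dominated_convergence[where w="indicator {-1..2::real} :: real \<Rightarrow> real" and s="\<lambda>n. q (ys n)" and f="\<lambda>w. 0"])
      show "AE w in lborel. (\<lambda>n. q (ys n) w) \<longlonglongrightarrow> 0"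
      proof (rule AE_I2)
        fix w
        have "((\<lambda>y. h (y + w) - h y) \<longlongrightarrow> 0) at_top"
          using sv_h_lim[OF sv, of w] by (simp add: h_def)
        then have "eventually (\<lambda>y. \<bar>h (y + w) - h y\<bar> < e/2) at_top"
          using e by (auto dest: tendstoD[where e="e/2"] simp: dist_real_def)
        then have "eventually (\<lambda>n. \<bar>h (ys n + w) - h (ys n)\<bar> < e/2) sequentially"
          using ys by (rule filterlim_iff[THEN iffD1, rule_format, rotated])
        then have "eventually (\<lambda>n. q (ys n) w = 0) sequentially"
          by eventually_elim (auto simp: q_def)
        then show "(\<lambda>n. q (ys n) w) \<longlonglongrightarrow> 0"
          by (rule tendsto_eventually)
      qed
      show "\<And>i. AE w in lborel. norm (q (ys i) w) \<le> indicator {-1..2::real} w"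
        using qb by auto
    qed (use intI in auto)
    then show ?thesis by (simp add: I_def)
  qed
  define ys where "ys n = xs n + vs n" for n
  have xs_lim: "filterlim xs at_top sequentially"
    by (rule filterlim_at_top_mono[OF filterlim_real_sequentially]) (use xs in auto)
  have ys_lim: "filterlim ys at_top sequentially"
  proof (rule filterlim_at_top_mono[OF filterlim_real_sequentially])
    have "real n \<le> ys n" for n using xs[of n] vs[of n] by (auto simp: ys_def)
    then show "\<forall>\<^sub>F x in sequentially. real x \<le> ys x" by (auto intro: always_eventually)
  qed
  have B: "1 \<le> I (xs n) + I (ys n)" for n
  proof -
    define x where "x = xs n"
    define y where "y = ys n"
    have xy: "x \<le> y" "y \<le> x + 1" using vs[of n] by (auto simp: x_def y_def ys_def)
    have hxy: "\<bar>h y - h x\<bar> > e" using big[of n] by (simp add: x_def y_def ys_def)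
    define q' where "q' c z = indicator {c-1..c+2::real} z * (if \<bar>h z - h c\<bar> \<ge> e/2 then 1 else 0::real)" for c z
    have q'm[measurable]: "q' c \<in> borel_measurable borel" for c
      unfolding q'_def by measurable
    have q'int: "integrable lborel (q' c)" for c
      by (rule Bochner_Integration.integrable_bound[where f="indicator {c-1..c+2::real}"])
         (auto intro!: integrable_real_indicator simp: q'_def indicator_def)
    have shift: "(\<integral>z. q' c z \<partial>lborel) = I c" for c
      unfolding I_def
      by (subst lborel_integral_real_affine[where c=1 and t=c]) (auto simp: q'_def q_def indicator_def intro!: Bochner_Integration.integral_cong)
    have "(1::real) = (\<integral>z. (indicator {x+1..x+2::real} z :: real) \<partial>lborel)"
      by simp
    also have "\<dots> \<le> (\<integral>z. q' x z + q' y z \<partial>lborel)"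
    proof (rule integral_mono)
      show "integrable lborel (\<lambda>z. q' x z + q' y z)" using q'int by auto
      fix z :: real
      show "indicator {x+1..x+2::real} z \<le> q' x z + q' y z"
        using xy hxy by (auto simp: q'_def indicator_def abs_if split: if_splits)
    qed (auto intro!: integrable_real_indicator)
    also have "\<dots> = I x + I y"
      using q'int by (simp add: shift)
    finally show ?thesis by (simp add: x_def y_def)
  qed
  have "(\<lambda>n. I (xs n) + I (ys n)) \<longlonglongrightarrow> 0 + 0"
    by (intro tendsto_add A xs_lim ys_lim)
  then have "1 \<le> (0::real) + 0"
    by (rule LIMSEQ_le_const) (use B in auto)
  then show False by simp
qed

lemma potter_h:
  assumes sv: "slowly_varying L" and d: "d > 0"
  shows "\<exists>X. \<forall>x\<ge>X. \<forall>u\<ge>0. \<bar>ln (L (exp (x + u))) - ln (L (exp x))\<bar> \<le> d * (u + 1)"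
proof -
  define h where "h x = ln (L (exp x))" for x
  obtain X where X: "\<And>x v. x \<ge> X \<Longrightarrow> v \<in> {0..1} \<Longrightarrow> \<bar>h (x + v) - h x\<bar> \<le> d"
    using UCT_h[OF sv d] unfolding h_def by blast
  have ind: "\<forall>x\<ge>X. \<forall>u. 0 \<le> u \<and> u \<le> real k \<longrightarrow> \<bar>h (x + u) - h x\<bar> \<le> d * real k" for k :: nat
  proof (induction k)
    case 0
    then show ?case by auto
  next
    case (Suc k)
    show ?case
    proof (intro allI impI)
      fix x u assume x: "x \<ge> X" and u: "0 \<le> u \<and> u \<le> real (Suc k)"
      show "\<bar>h (x + u) - h x\<bar> \<le> d * real (Suc k)"
      proof (cases "u \<le> 1")
        case True
        then have "\<bar>h (x + u) - h x\<bar> \<le> d" using X[OF x, of u] u by auto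
        also have "\<dots> \<le> d * real (Suc k)" using d by auto
        finally show ?thesis .
      next
        case False
        have 1: "\<bar>h (x + 1) - h x\<bar> \<le> d" using X[OF x, of 1] by auto
        have 2: "\<bar>h ((x + 1) + (u - 1)) - h (x + 1)\<bar> \<le> d * real k"
          using Suc.IH[rule_format, of "x+1" "u-1"] x u False by auto
        have "\<bar>h (x + u) - h x\<bar> \<le> \<bar>h ((x + 1) + (u - 1)) - h (x + 1)\<bar> + \<bar>h (x + 1) - h x\<bar>"
          by simp
        also have "\<dots> \<le> d * real k + d" using 1 2 by linarith
        finally show ?thesis by (simp add: algebra_simps)
      qed
    qed
  qed
  have "\<bar>h (x + u) - h x\<bar> \<le> d * (u + 1)" if "x \<ge> X" "u \<ge> 0" for x u
  proof -
    define k where "k = nat \<lceil>u\<rceil>"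
    have k1: "u \<le> real k" "real k \<le> u + 1" using that by (auto simp: k_def)
    have "\<bar>h (x + u) - h x\<bar> \<le> d * real k" using ind[of k] that k1 by auto
    also have "\<dots> \<le> d * (u + 1)" using k1 d by auto
    finally show ?thesis .
  qed
  then show ?thesis unfolding h_def by blast
qed

lemma potter_L:
  assumes sv: "slowly_varying L" and d: "d > 0"
  shows "\<exists>X0>0. \<forall>t\<ge>X0. \<forall>s\<ge>1. L (t * s) \<le> exp d * s powr d * L t \<and> L t \<le> exp d * s powr d * L (t * s)"
proof -
  have pos: "\<And>t. t > 0 \<Longrightarrow> L t > 0" using sv unfolding slowly_varying_def by auto
  obtain X where X: "\<And>x u. x \<ge> X \<Longrightarrow> u \<ge> 0 \<Longrightarrow> \<bar>ln (L (exp (x + u))) - ln (L (exp x))\<bar> \<le> d * (u + 1)"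
    using potter_h[OF sv d] by blast
  have "L (t * s) \<le> exp d * s powr d * L t \<and> L t \<le> exp d * s powr d * L (t * s)"
    if t: "t \<ge> exp X" and s: "s \<ge> 1" for t s
  proof -
    have tp: "t > 0" using t by (meson exp_gt_zero less_le_trans)
    have sp: "s > 0" using s by auto
    have "\<bar>ln (L (exp (ln t + ln s))) - ln (L (exp (ln t)))\<bar> \<le> d * (ln s + 1)"
      using X[of "ln t" "ln s"] t s tp by (auto simp: ln_ge_iff)
    then have *: "\<bar>ln (L (t * s)) - ln (L t)\<bar> \<le> d * ln s + d"
      using tp sp by (simp add: exp_add algebra_simps)
    have Lts: "L (t * s) > 0" "L t > 0" using tp sp pos by auto
    have e: "exp d * s powr d = exp (d * ln s + d)"
      using sp by (simp add: powr_def exp_add algebra_simps)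
    have "L (t * s) = exp (ln (L (t * s)))" using Lts by simp
    also have "\<dots> \<le> exp (d * ln s + d + ln (L t))" using * by auto
    also have "\<dots> = exp d * s powr d * L t" using e Lts by (simp add: exp_add)
    finally have A: "L (t * s) \<le> exp d * s powr d * L t" .
    have "L t = exp (ln (L t))" using Lts by simp
    also have "\<dots> \<le> exp (d * ln s + d + ln (L (t * s)))" using * by auto
    also have "\<dots> = exp d * s powr d * L (t * s)" using e Lts by (simp add: exp_add)
    finally show ?thesis using A by simp
  qed
  then show ?thesis by (intro exI[of _ "exp X"]) auto
qed

lemma potter_global:
  assumes sv: "slowly_varying L" and lb: "locally_bounded_away L" and d: "d > 0"
  shows "\<exists>A>0. \<forall>t>0. \<forall>s\<ge>1. L (t * s) \<le> A * s powr d * L t \<and> L t \<le> A * s powr d * L (t * s)"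
proof -
  have pos: "\<And>t. t > 0 \<Longrightarrow> L t > 0" using sv unfolding slowly_varying_def by auto
  obtain X0 where X0: "X0 > 0" and P: "\<And>t s. t \<ge> X0 \<Longrightarrow> s \<ge> 1 \<Longrightarrow> L (t * s) \<le> exp d * s powr d * L t \<and> L t \<le> exp d * s powr d * L (t * s)"
    using potter_L[OF sv d] by blast
  obtain c C where c: "c > 0" and cC: "\<And>t. t \<in> {0..X0} \<Longrightarrow> c \<le> L t \<and> L t \<le> C"
    using lb X0 unfolding locally_bounded_away_def by (meson less_imp_le)
  have cleC: "c \<le> C" using cC[of 0] X0 by auto
  define A where "A = exp d * (C / c)"
  have A1: "exp d \<le> A" using cleC c by (auto simp: A_def field_simps)
  have Ap: "A > 0" using c cleC by (auto simp: A_def)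
  have "L (t * s) \<le> A * s powr d * L t \<and> L t \<le> A * s powr d * L (t * s)" if t: "t > 0" and s: "s \<ge> 1" for t s
  proof (cases "t \<ge> X0")
    case True
    have sd: "s powr d \<ge> 0" by simp
    have "L t > 0" "L (t * s) > 0" using t s pos by auto
    then have "exp d * s powr d * L t \<le> A * s powr d * L t" "exp d * s powr d * L (t * s) \<le> A * s powr d * L (t * s)"
      using A1 sd by (auto intro!: mult_right_mono)
    then show ?thesis using P[OF True s] by linarith
  next
    case False
    have Lt: "c \<le> L t" "L t \<le> C" using cC[of t] t False by auto
    have s1: "s powr d \<ge> 1" using s d by (simp add: ge_one_powr_ge_zero)
    have ed: "exp d \<ge> 1" using d by simp
    show ?thesis
    proof (cases "t * s \<le> X0")
      case True
      have Lts: "c \<le> L (t * s)" "L (t * s) \<le> C" using cC[of "t * s"] t s True by auto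
      have eq: "A * s powr d * c = C * (exp d * s powr d)" using c by (simp add: A_def)
      have m1: "1 \<le> exp d * s powr d" using ed s1 mult_mono[of 1 "exp d" 1 "s powr d"] by auto
      have C0: "C \<ge> 0" using cleC c by auto
      have "C \<le> C * (exp d * s powr d)" using m1 C0 mult_left_mono[OF m1 C0] by simp
      then have Cle: "C \<le> A * s powr d * c" by (simp only: eq)
      have As: "A * s powr d \<ge> 0" using Ap by simp
      have "A * s powr d * c \<le> A * s powr d * L t" "A * s powr d * c \<le> A * s powr d * L (t * s)"
        using mult_left_mono[OF Lt(1) As] mult_left_mono[OF Lts(1) As] by auto
      then have "C \<le> A * s powr d * L t" "C \<le> A * s powr d * L (t * s)"
        using Cle by linarith+
      then show ?thesis using Lt Lts by linarith
    next
      case False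
      define s' where "s' = t * s / X0"
      have s'1: "s' \<ge> 1" using False X0 by (auto simp: s'_def)
      have s's: "s' \<le> s" using \<open>\<not> t \<ge> X0\<close> X0 s by (auto simp: s'_def field_simps)
      have ts: "t * s = X0 * s'" using X0 by (auto simp: s'_def)
      have PX: "L (X0 * s') \<le> exp d * s' powr d * L X0" "L X0 \<le> exp d * s' powr d * L (X0 * s')"
        using P[of X0 s'] s'1 by auto
      have LX0: "c \<le> L X0" "L X0 \<le> C" using cC[of X0] X0 by auto
      have pw: "s' powr d \<le> s powr d" using s's s'1 d by (intro powr_mono2) auto
      have Lts: "L (t * s) > 0" using t s pos by auto
      have "L (t * s) \<le> exp d * s powr d * C"
      proof -
        have "L (t * s) \<le> exp d * s' powr d * L X0" using PX ts by simp
        also have "\<dots> \<le> exp d * s powr d * C"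
          using pw LX0 c by (intro mult_mono) auto
        finally show ?thesis .
      qed
      also have "\<dots> = A * s powr d * c" using c by (simp add: A_def)
      also have "\<dots> \<le> A * s powr d * L t" using Lt Ap by (intro mult_left_mono) auto
      finally have 1: "L (t * s) \<le> A * s powr d * L t" .
      have "L t \<le> C" using Lt by simp
      also have "\<dots> = (C / c) * c" using c by simp
      also have "\<dots> \<le> (C / c) * L X0" using LX0 c cleC by (intro mult_left_mono) auto
      also have "\<dots> \<le> (C / c) * (exp d * s' powr d * L (X0 * s'))"
        using PX c cleC by (intro mult_left_mono) auto
      also have "\<dots> \<le> (C / c) * (exp d * s powr d * L (t * s))"
        using pw Lts ts c cleC by (intro mult_left_mono) auto
      also have "\<dots> = A * s powr d * L (t * s)" by (simp add: A_def)
      finally show ?thesis using 1 by simp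
    qed
  qed
  then show ?thesis using Ap by blast
qed


lemma two_pow_powr: "((2::real) ^ k) powr a = 2 powr (real k * a)"
  by (simp add: powr_realpow[symmetric] powr_powr)

lemma two_powr_power: "((2::real) powr a) ^ k = 2 powr (real k * a)"
  by (simp add: powr_power)

lemma geom_le:
  fixes r :: real assumes "0 \<le> r" "r < 1"
  shows "(\<Sum>k<N. r ^ k) \<le> 1 / (1 - r)"
proof -
  have "(\<Sum>k<N. r ^ k) = (1 - r ^ N) / (1 - r)" using assms by (simp add: sum_gp_strict)
  also have "\<dots> \<le> 1 / (1 - r)" using assms by (intro divide_right_mono) auto
  finally show ?thesis .
qed

lemma pw1:
  fixes T x :: real assumes T: "T > 0"
  shows "(if T < \<bar>x\<bar> \<and> \<bar>x\<bar> \<le> T * 2 ^ N then \<bar>x\<bar> else 0)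
          \<le> (\<Sum>k<N. T * 2 ^ (k + 1) * (if T * 2 ^ k \<le> \<bar>x\<bar> then 1 else 0))"
proof (induction N)
  case 0
  then show ?case by auto
next
  case (Suc N)
  have TN: "T \<le> T * 2 ^ N" using T by simp
  have "(if T < \<bar>x\<bar> \<and> \<bar>x\<bar> \<le> T * 2 ^ Suc N then \<bar>x\<bar> else 0)
        \<le> (if T < \<bar>x\<bar> \<and> \<bar>x\<bar> \<le> T * 2 ^ N then \<bar>x\<bar> else 0) + T * 2 ^ (N + 1) * (if T * 2 ^ N \<le> \<bar>x\<bar> then 1 else 0)"
    using TN T by auto
  also have "\<dots> \<le> (\<Sum>k<Suc N. T * 2 ^ (k + 1) * (if T * 2 ^ k \<le> \<bar>x\<bar> then 1 else 0))"
    using Suc.IH by simp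
  finally show ?case .
qed

lemma pw2:
  fixes T x :: real assumes T: "T > 0"
  shows "(if \<bar>x\<bar> \<le> T then x\<^sup>2 else 0)
          \<le> (\<Sum>k<N. T\<^sup>2 * (1/4) ^ k * (if T / 2 ^ (k + 1) \<le> \<bar>x\<bar> then 1 else 0))
             + (if \<bar>x\<bar> \<le> T / 2 ^ N then x\<^sup>2 else 0)"
proof (induction N)
  case 0
  then show ?case by auto
next
  case (Suc N)
  have step: "(if \<bar>x\<bar> \<le> T / 2 ^ N then x\<^sup>2 else 0)
        \<le> T\<^sup>2 * (1/4) ^ N * (if T / 2 ^ (N + 1) \<le> \<bar>x\<bar> then 1 else 0) + (if \<bar>x\<bar> \<le> T / 2 ^ Suc N then x\<^sup>2 else 0)"
  proof (cases "\<bar>x\<bar> \<le> T / 2 ^ Suc N")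
    case True
    then show ?thesis using T by auto
  next
    case False
    show ?thesis
    proof (cases "\<bar>x\<bar> \<le> T / 2 ^ N")
      case True
      have "x\<^sup>2 = \<bar>x\<bar>\<^sup>2" by simp
      also have "\<dots> \<le> (T / 2 ^ N)\<^sup>2" using True by (intro power_mono) auto
      also have "\<dots> = T\<^sup>2 * (1/4) ^ N"
      proof -
        have "(4::real)^N = (2^N)^2" by (simp add: power2_eq_square power_mult_distrib[symmetric])
        then show ?thesis by (simp add: power_divide power_one_over)
      qed
      finally show ?thesis using True False by auto
    qed (use T in auto)
  qed
  show ?case using Suc.IH step by simp
qed

lemma rem_le:
  fixes T x :: real assumes T: "T > 0"
  shows "(if \<bar>x\<bar> \<le> T / 2 ^ N then x\<^sup>2 else 0) \<le> T\<^sup>2 * (1/4) ^ N"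
proof (cases "\<bar>x\<bar> \<le> T / 2 ^ N")
  case True
  have "x\<^sup>2 = \<bar>x\<bar>\<^sup>2" by simp
  also have "\<dots> \<le> (T / 2 ^ N)\<^sup>2" using True by (intro power_mono) auto
  also have "\<dots> = T\<^sup>2 * (1/4) ^ N"
  proof -
    have "(4::real)^N = (2^N)^2" by (simp add: power2_eq_square power_mult_distrib[symmetric])
    then show ?thesis by (simp add: power_divide power_one_over)
  qed
  finally show ?thesis using True by simp
qed simp

lemma ev_pow:
  fixes T y :: real assumes T: "T > 0"
  shows "eventually (\<lambda>N. y \<le> T * 2 ^ N) sequentially"
proof -
  obtain n where n: "y / T < 2 ^ n" using real_arch_pow[of 2 "y / T"] by auto
  have "y \<le> T * 2 ^ N" if "N \<ge> n" for N
  proof -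
    have "(2::real) ^ n \<le> 2 ^ N" using that by (simp add: power_increasing)
    then have "y / T \<le> 2 ^ N" using n by linarith
    then show ?thesis using T by (simp add: field_simps)
  qed
  then show ?thesis by (auto simp: eventually_sequentially)
qed

context prob_space
begin

lemma ind_prob:
  assumes [measurable]: "Measurable.pred M P"
  shows "expectation (\<lambda>x. if P x then 1 else 0 :: real) = prob {x \<in> space M. P x}"
proof -
  have "(\<lambda>x. if P x then 1 else 0 :: real) = indicator {x. P x}" by (auto simp: indicator_def)
  moreover have "{x. P x} \<inter> space M = {x \<in> space M. P x}" by auto
  ultimately show ?thesis by simp
qed

lemma ind_int:
  assumes [measurable]: "Measurable.pred M P"
  shows "integrable M (\<lambda>x. if P x then 1 else 0 :: real)"
  by (rule integrable_const_bound[where B=1]) auto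

lemma tail_moments:
  fixes X :: "'a \<Rightarrow> real" and L :: "real \<Rightarrow> real"
  assumes Xm[measurable]: "X \<in> borel_measurable M"
    and tail: "\<And>t. t > 0 \<Longrightarrow> prob {x\<in>space M. t \<le> \<bar>X x\<bar>} \<le> K * t powr (-\<alpha>) * L t"
    and Lpos: "\<And>t. t > 0 \<Longrightarrow> L t > 0"
    and pot: "\<And>t s. t > 0 \<Longrightarrow> s \<ge> 1 \<Longrightarrow> L (t * s) \<le> A * s powr d * L t \<and> L t \<le> A * s powr d * L (t * s)"
    and K: "K \<ge> 0" and A: "A > 0" and ad1: "1 < \<alpha> - d" and ad2: "\<alpha> + d < 2"
  shows tm_int: "integrable M X"
    and tm_1: "\<And>T. T > 0 \<Longrightarrow> expectation (\<lambda>x. if T < \<bar>X x\<bar> then \<bar>X x\<bar> else 0)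
               \<le> (2*K*A / (1 - 2 powr (1 - \<alpha> + d))) * T powr (1-\<alpha>) * L T"
    and tm_2: "\<And>T. T > 0 \<Longrightarrow> expectation (\<lambda>x. if \<bar>X x\<bar> \<le> T then (X x)\<^sup>2 else 0)
               \<le> (K*A*2 powr (\<alpha>+d) / (1 - 2 powr (\<alpha>+d-2))) * T powr (2-\<alpha>) * L T"
proof -
  define r1 where "r1 = (2::real) powr (1 - \<alpha> + d)"
  define r2 where "r2 = (2::real) powr (\<alpha> + d - 2)"
  define D1 where "D1 = 2*K*A / (1 - r1)"
  define D2 where "D2 = K*A*2 powr (\<alpha>+d) / (1 - r2)"
  have r1: "0 \<le> r1" "r1 < 1" using ad1 powr_less_mono[of "1 - \<alpha> + d" 0 2] by (auto simp: r1_def)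
  have r2: "0 \<le> r2" "r2 < 1" using ad2 powr_less_mono[of "\<alpha> + d - 2" 0 2] by (auto simp: r2_def)
  have D1: "D1 \<ge> 0" using r1 K A by (auto simp: D1_def)
  have S1: "expectation (\<lambda>x. if T < \<bar>X x\<bar> \<and> \<bar>X x\<bar> \<le> T * 2 ^ N then \<bar>X x\<bar> else 0) \<le> D1 * T powr (1-\<alpha>) * L T"
    if T: "T > 0" for T N
  proof -
    have LT: "L T > 0" using Lpos T by auto
    have trm: "T * 2^(k+1) * prob {x\<in>space M. T * 2^k \<le> \<bar>X x\<bar>} \<le> 2*K*A*T powr (1-\<alpha>) * L T * r1^k" for k
    proof -
      have tk: "T * 2^k > 0" using T by simp
      have P: "L (T * 2^k) \<le> A * (2^k) powr d * L T" using pot[OF T, of "2^k"] by simp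
      have c0: "K * (T * 2^k) powr (-\<alpha>) \<ge> 0" using K by simp
      have "prob {x\<in>space M. T * 2^k \<le> \<bar>X x\<bar>} \<le> K * (T * 2^k) powr (-\<alpha>) * L (T * 2^k)"
        using tail[OF tk] .
      also have "\<dots> \<le> K * (T * 2^k) powr (-\<alpha>) * (A * (2^k) powr d * L T)"
        using mult_left_mono[OF P c0] by simp
      finally have "T * 2^(k+1) * prob {x\<in>space M. T * 2^k \<le> \<bar>X x\<bar>}
          \<le> T * 2^(k+1) * (K * (T * 2^k) powr (-\<alpha>) * (A * (2^k) powr d * L T))"
        using T by (intro mult_left_mono) auto
      also have "\<dots> = 2*K*A*L T * (T * T powr (-\<alpha>)) * (2^k * 2 powr (real k * (-\<alpha>)) * 2 powr (real k * d))"
        using T by (simp add: powr_mult two_pow_powr)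
      also have "T * T powr (-\<alpha>) = T powr (1 - \<alpha>)"
        using T by (simp add: powr_mult_base)
      also have "(2::real)^k * 2 powr (real k * (-\<alpha>)) * 2 powr (real k * d) = r1^k"
        by (simp add: r1_def two_powr_power powr_realpow[symmetric] powr_add[symmetric] algebra_simps)
      finally show ?thesis by (simp add: algebra_simps)
    qed
    have "expectation (\<lambda>x. if T < \<bar>X x\<bar> \<and> \<bar>X x\<bar> \<le> T * 2 ^ N then \<bar>X x\<bar> else 0)
      \<le> expectation (\<lambda>x. \<Sum>k<N. T * 2 ^ (k + 1) * (if T * 2 ^ k \<le> \<bar>X x\<bar> then 1 else 0))"
    proof (rule integral_mono)
      show "integrable M (\<lambda>x. if T < \<bar>X x\<bar> \<and> \<bar>X x\<bar> \<le> T * 2 ^ N then \<bar>X x\<bar> else 0)"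
        by (rule integrable_const_bound[where B="T * 2^N"]) (use T in auto)
      show "integrable M (\<lambda>x. \<Sum>k<N. T * 2 ^ (k + 1) * (if T * 2 ^ k \<le> \<bar>X x\<bar> then 1 else 0))"
        by (intro Bochner_Integration.integrable_sum Bochner_Integration.integrable_mult_right ind_int) auto
    qed (use pw1[OF T] in auto)
    also have "\<dots> = (\<Sum>k<N. T * 2 ^ (k + 1) * prob {x\<in>space M. T * 2^k \<le> \<bar>X x\<bar>})"
      by (subst Bochner_Integration.integral_sum) (auto intro!: Bochner_Integration.integrable_mult_right ind_int simp: ind_prob prob_space)
    also have "\<dots> \<le> (\<Sum>k<N. 2*K*A*T powr (1-\<alpha>) * L T * r1^k)"
      by (intro sum_mono trm)
    also have "\<dots> = 2*K*A*T powr (1-\<alpha>) * L T * (\<Sum>k<N. r1^k)"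
      by (simp add: sum_distrib_left)
    also have "\<dots> \<le> 2*K*A*T powr (1-\<alpha>) * L T * (1 / (1 - r1))"
      using geom_le[OF r1] K A LT by (intro mult_left_mono) auto
    also have "\<dots> = D1 * T powr (1-\<alpha>) * L T" by (simp add: D1_def)
    finally show ?thesis .
  qed
  have ev_lim: "(\<lambda>N. if T < y \<and> y \<le> T * 2 ^ N then y else 0) \<longlonglongrightarrow> (if T < y then y else 0)"
    if "T > 0" for T y :: real
  proof (rule tendsto_eventually)
    show "\<forall>\<^sub>F N in sequentially. (if T < y \<and> y \<le> T * 2 ^ N then y else 0) = (if T < y then y else 0)"
      using ev_pow[OF that, of y] by eventually_elim auto
  qed
  define f where "f N x = (if \<bar>X x\<bar> \<le> 2^N then \<bar>X x\<bar> else 0)" for N x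
  have fm[measurable]: "f N \<in> borel_measurable M" for N unfolding f_def by measurable
  have fint: "integrable M (f N)" for N
    by (rule integrable_const_bound[where B="2^N"]) (auto simp: f_def)
  have gint: "integrable M (\<lambda>x. if T < \<bar>X x\<bar> \<and> \<bar>X x\<bar> \<le> T * 2 ^ N then \<bar>X x\<bar> else 0)" if "T > 0" for T N
    by (rule integrable_const_bound[where B="T * 2^N"]) (use that in auto)
  have Ef: "expectation (f N) \<le> 1 + D1 * 1 powr (1-\<alpha>) * L 1" for N
  proof -
    have "expectation (f N) \<le> expectation (\<lambda>x. 1 + (if 1 < \<bar>X x\<bar> \<and> \<bar>X x\<bar> \<le> 1 * 2 ^ N then \<bar>X x\<bar> else 0))"
      by (rule integral_mono) (use fint gint[of 1 N] in \<open>auto simp: f_def\<close>)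
    also have "\<dots> = 1 + expectation (\<lambda>x. if 1 < \<bar>X x\<bar> \<and> \<bar>X x\<bar> \<le> 1 * 2 ^ N then \<bar>X x\<bar> else 0)"
      using gint[of 1 N] by (subst Bochner_Integration.integral_add) (auto simp: prob_space)
    also have "\<dots> \<le> 1 + D1 * 1 powr (1-\<alpha>) * L 1" using S1[of 1 N] by simp
    finally show ?thesis .
  qed
  have fmono: "f N x \<le> f (Suc N) x" for N x
    by (auto simp: f_def order_trans[OF _ power_increasing[of N "Suc N" "2::real"]])
  have inc: "incseq (\<lambda>N. expectation (f N))"
    by (rule incseq_SucI, rule integral_mono) (use fint fmono in auto)
  have bdd: "bdd_above (range (\<lambda>N. expectation (f N)))"
    using Ef by (auto intro!: bdd_aboveI)
  have absint: "integrable M (\<lambda>x. \<bar>X x\<bar>)"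
  proof (rule integrable_monotone_convergence[where f=f])
    show "AE x in M. mono (\<lambda>n. f n x)" by (auto simp: mono_iff_le_Suc fmono)
    show "AE x in M. (\<lambda>i. f i x) \<longlonglongrightarrow> \<bar>X x\<bar>"
    proof (rule AE_I2, rule tendsto_eventually)
      fix x
      show "\<forall>\<^sub>F N in sequentially. f N x = \<bar>X x\<bar>"
        using ev_pow[OF zero_less_one, of "\<bar>X x\<bar>"] by eventually_elim (auto simp: f_def)
    qed
    show "(\<lambda>i. expectation (f i)) \<longlonglongrightarrow> (SUP N. expectation (f N))"
      by (rule LIMSEQ_incseq_SUP[OF bdd inc])
  qed (use fint in auto)
  then show Xint: "integrable M X" by (simp add: integrable_abs_iff)
  show "expectation (\<lambda>x. if T < \<bar>X x\<bar> then \<bar>X x\<bar> else 0)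
               \<le> (2*K*A / (1 - 2 powr (1 - \<alpha> + d))) * T powr (1-\<alpha>) * L T" if T: "T > 0" for T
  proof -
    have "(\<lambda>N. expectation (\<lambda>x. if T < \<bar>X x\<bar> \<and> \<bar>X x\<bar> \<le> T * 2 ^ N then \<bar>X x\<bar> else 0))
          \<longlonglongrightarrow> expectation (\<lambda>x. if T < \<bar>X x\<bar> then \<bar>X x\<bar> else 0)"
    proof (rule integral_dominated_convergence[where w="\<lambda>x. \<bar>X x\<bar>"])
      show "AE x in M. (\<lambda>N. if T < \<bar>X x\<bar> \<and> \<bar>X x\<bar> \<le> T * 2 ^ N then \<bar>X x\<bar> else 0) \<longlonglongrightarrow> (if T < \<bar>X x\<bar> then \<bar>X x\<bar> else 0)"
        using ev_lim[OF T] by auto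
    qed (use absint in auto)
    then have "expectation (\<lambda>x. if T < \<bar>X x\<bar> then \<bar>X x\<bar> else 0) \<le> D1 * T powr (1-\<alpha>) * L T"
      by (rule LIMSEQ_le_const2) (use S1[OF T] in auto)
    then show ?thesis by (simp add: D1_def r1_def)
  qed
  show "expectation (\<lambda>x. if \<bar>X x\<bar> \<le> T then (X x)\<^sup>2 else 0)
               \<le> (K*A*2 powr (\<alpha>+d) / (1 - 2 powr (\<alpha>+d-2))) * T powr (2-\<alpha>) * L T" if T: "T > 0" for T
  proof -
    have LT: "L T > 0" using Lpos T by auto
    have trm2: "T\<^sup>2 * (1/4)^k * prob {x\<in>space M. T / 2^(k+1) \<le> \<bar>X x\<bar>} \<le> K*A*2 powr (\<alpha>+d) * T powr (2-\<alpha>) * L T * r2^k" for k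
    proof -
      define t where "t = T / 2^(k+1)"
      have tk: "t > 0" using T by (simp add: t_def)
      have tT: "t * 2^(k+1) = T" by (simp add: t_def)
      have h1: "(1::real) \<le> 2^(k+1)" by (rule one_le_power) simp
      have P: "L t \<le> A * (2^(k+1)) powr d * L T" using pot[OF tk h1] tT by simp
      have c0: "K * t powr (-\<alpha>) \<ge> 0" using K by simp
      have "prob {x\<in>space M. t \<le> \<bar>X x\<bar>} \<le> K * t powr (-\<alpha>) * L t"
        using tail[OF tk] .
      also have "\<dots> \<le> K * t powr (-\<alpha>) * (A * (2^(k+1)) powr d * L T)"
        using mult_left_mono[OF P c0] by simp
      finally have "T\<^sup>2 * (1/4)^k * prob {x\<in>space M. t \<le> \<bar>X x\<bar>}
          \<le> T\<^sup>2 * (1/4)^k * (K * t powr (-\<alpha>) * (A * (2^(k+1)) powr d * L T))"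
        by (intro mult_left_mono) auto
      also have "\<dots> = K*A*L T * (T\<^sup>2 * T powr (-\<alpha>)) * ((1/4)^k * (2^(k+1)) powr d / (2^(k+1)) powr (-\<alpha>))"
        using T by (simp add: t_def powr_divide del: power_Suc)
      also have "((2::real)^(k+1)) powr d = 2 powr (real (k+1) * d)" by (rule two_pow_powr)
      also have "((2::real)^(k+1)) powr (-\<alpha>) = 2 powr (real (k+1) * (-\<alpha>))" by (rule two_pow_powr)
      also have "T\<^sup>2 * T powr (-\<alpha>) = T powr (2 - \<alpha>)"
        using T by (simp add: powr_add[symmetric] flip: powr_numeral)
      also have "(1/4::real)^k * 2 powr (real (k+1) * d) / 2 powr (real (k+1) * (-\<alpha>)) = 2 powr (\<alpha>+d) * r2^k"
      proof -
        have q: "(1/4::real) = 2 powr (-2)" by (simp add: powr_minus_divide)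
        have "(1/4::real)^k = 2 powr (real k * (-2))" by (simp only: q two_powr_power)
        then have "(1/4::real)^k * 2 powr (real (k+1) * d) / 2 powr (real (k+1) * (-\<alpha>))
             = 2 powr (real k * (-2)) * 2 powr (real (k+1) * d) / 2 powr (real (k+1) * (-\<alpha>))"
          by (simp only:)
        also have "\<dots> = 2 powr (real k * (-2) + real (k+1) * d - real (k+1) * (-\<alpha>))"
          by (simp only: powr_add powr_diff)
        also have "\<dots> = 2 powr ((\<alpha>+d) + real k * (\<alpha> + d - 2))"
          by (simp add: algebra_simps)
        also have "\<dots> = 2 powr (\<alpha>+d) * r2^k"
          by (simp add: powr_add r2_def two_powr_power)
        finally show ?thesis .
      qed
      finally show ?thesis by (simp add: t_def algebra_simps)
    qed
    have bnd: "expectation (\<lambda>x. if \<bar>X x\<bar> \<le> T then (X x)\<^sup>2 else 0) \<le> D2 * T powr (2-\<alpha>) * L T + T\<^sup>2 * (1/4)^N" for N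
    proof -
      have "expectation (\<lambda>x. if \<bar>X x\<bar> \<le> T then (X x)\<^sup>2 else 0)
        \<le> expectation (\<lambda>x. (\<Sum>k<N. T\<^sup>2 * (1/4) ^ k * (if T / 2 ^ (k + 1) \<le> \<bar>X x\<bar> then 1 else 0)) + T\<^sup>2 * (1/4)^N)"
      proof (rule integral_mono)
        show "integrable M (\<lambda>x. if \<bar>X x\<bar> \<le> T then (X x)\<^sup>2 else 0)"
          by (rule integrable_const_bound[where B="T\<^sup>2"]) (use T in \<open>auto intro!: AE_I2 simp: abs_le_square_iff[symmetric]\<close>)
        show "integrable M (\<lambda>x. (\<Sum>k<N. T\<^sup>2 * (1/4) ^ k * (if T / 2 ^ (k + 1) \<le> \<bar>X x\<bar> then 1 else 0)) + T\<^sup>2 * (1/4)^N)"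
          by (intro Bochner_Integration.integrable_add Bochner_Integration.integrable_sum Bochner_Integration.integrable_mult_right ind_int) auto
        fix x
        show "(if \<bar>X x\<bar> \<le> T then (X x)\<^sup>2 else 0) \<le> (\<Sum>k<N. T\<^sup>2 * (1/4) ^ k * (if T / 2 ^ (k + 1) \<le> \<bar>X x\<bar> then 1 else 0)) + T\<^sup>2 * (1/4)^N"
          using pw2[OF T, of "X x" N] rem_le[OF T, of "X x" N] by linarith
      qed
      also have "\<dots> = (\<Sum>k<N. T\<^sup>2 * (1/4) ^ k * prob {x\<in>space M. T / 2^(k+1) \<le> \<bar>X x\<bar>}) + T\<^sup>2 * (1/4)^N"
        by (subst Bochner_Integration.integral_add, (auto intro!: Bochner_Integration.integrable_sum Bochner_Integration.integrable_mult_right ind_int)[2],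
            subst Bochner_Integration.integral_sum) (auto intro!: Bochner_Integration.integrable_mult_right ind_int simp: ind_prob prob_space)
      also have "\<dots> \<le> (\<Sum>k<N. K*A*2 powr (\<alpha>+d) * T powr (2-\<alpha>) * L T * r2^k) + T\<^sup>2 * (1/4)^N"
        by (intro add_right_mono sum_mono trm2)
      also have "(\<Sum>k<N. K*A*2 powr (\<alpha>+d) * T powr (2-\<alpha>) * L T * r2^k) = K*A*2 powr (\<alpha>+d) * T powr (2-\<alpha>) * L T * (\<Sum>k<N. r2^k)"
        by (simp add: sum_distrib_left)
      also have "\<dots> \<le> K*A*2 powr (\<alpha>+d) * T powr (2-\<alpha>) * L T * (1 / (1 - r2))"
        using geom_le[OF r2] K A LT by (intro mult_left_mono) auto
      also have "\<dots> = D2 * T powr (2-\<alpha>) * L T" by (simp add: D2_def)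
      finally show ?thesis by simp
    qed
    have "(\<lambda>N. D2 * T powr (2-\<alpha>) * L T + T\<^sup>2 * (1/4)^N) \<longlonglongrightarrow> D2 * T powr (2-\<alpha>) * L T + T\<^sup>2 * 0"
      by (intro tendsto_intros) auto
    then have "expectation (\<lambda>x. if \<bar>X x\<bar> \<le> T then (X x)\<^sup>2 else 0) \<le> D2 * T powr (2-\<alpha>) * L T + T\<^sup>2 * 0"
      by (rule LIMSEQ_le_const) (use bnd in auto)
    then show ?thesis by (simp add: D2_def r2_def)
  qed
qed

end


context prob_space
begin

lemma sum_bound:
  fixes \<xi> :: "nat \<Rightarrow> 'a \<Rightarrow> real"
  assumes \<xi>m[measurable]: "\<And>i. i \<ge> 1 \<Longrightarrow> \<xi> i \<in> borel_measurable M"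
    and indep: "indep_vars (\<lambda>_. borel) \<xi> {1..}"
    and int: "\<And>i. i \<ge> 1 \<Longrightarrow> integrable M (\<xi> i)"
    and m1: "\<And>i. i \<ge> 1 \<Longrightarrow> expectation (\<lambda>x. if T < \<bar>\<xi> i x\<bar> then \<bar>\<xi> i x\<bar> else 0) \<le> E1"
    and m2: "\<And>i. i \<ge> 1 \<Longrightarrow> expectation (\<lambda>x. if \<bar>\<xi> i x\<bar> \<le> T then (\<xi> i x)\<^sup>2 else 0) \<le> E2"
    and T: "T > 0"
  shows "prob {x\<in>space M. T\<^sup>2 \<le> (\<Sum>i=1..n. (if \<bar>\<xi> i x\<bar> \<le> T then \<xi> i x else 0) - expectation (\<xi> i))\<^sup>2}
         \<le> (real n * E2 + (real n * E1)\<^sup>2) / T\<^sup>2"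
proof -
  define I where "I = {1..n}"
  define \<mu> where "\<mu> i = expectation (\<xi> i)" for i
  define Y where "Y i x = (if \<bar>\<xi> i x\<bar> \<le> T then \<xi> i x else 0)" for i x
  define W where "W i x = Y i x - \<mu> i" for i x
  define m where "m i = expectation (Y i) - \<mu> i" for i
  have I1: "\<And>i. i \<in> I \<Longrightarrow> i \<ge> 1" by (auto simp: I_def)
  have Ym[measurable]: "Y i \<in> borel_measurable M" if "i \<ge> 1" for i
    unfolding Y_def using that by measurable
  have Wm[measurable]: "W i \<in> borel_measurable M" if "i \<ge> 1" for i
    unfolding W_def using that by measurable
  have Yb: "\<bar>Y i x\<bar> \<le> T" for i x using T by (auto simp: Y_def)
  have Wb: "\<bar>W i x\<bar> \<le> T + \<bar>\<mu> i\<bar>" for i x using Yb[of i x] by (auto simp: W_def)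
  have Yint: "integrable M (Y i)" if "i \<ge> 1" for i
    by (rule integrable_const_bound[where B=T]) (use Yb that in auto)
  have Wint: "integrable M (W i)" if "i \<ge> 1" for i
    by (rule integrable_const_bound[where B="T + \<bar>\<mu> i\<bar>"]) (use Wb that in auto)
  have WWint: "integrable M (\<lambda>x. W i x * W j x)" if "i \<ge> 1" "j \<ge> 1" for i j
  proof (rule integrable_const_bound[where B="(T + \<bar>\<mu> i\<bar>) * (T + \<bar>\<mu> j\<bar>)"])
    show "AE x in M. norm (W i x * W j x) \<le> (T + \<bar>\<mu> i\<bar>) * (T + \<bar>\<mu> j\<bar>)"
    proof (rule AE_I2)
      fix x show "norm (W i x * W j x) \<le> (T + \<bar>\<mu> i\<bar>) * (T + \<bar>\<mu> j\<bar>)"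
        using mult_mono[OF Wb[of i x] Wb[of j x]] T by (auto simp: abs_mult)
    qed
  qed (use that in auto)
  define Z where "Z x = (\<Sum>i\<in>I. W i x)" for x
  have Z2: "(Z x)\<^sup>2 = (\<Sum>i\<in>I. \<Sum>j\<in>I. W i x * W j x)" for x
    by (simp add: Z_def power2_eq_square sum_product)
  have Z2int: "integrable M (\<lambda>x. (Z x)\<^sup>2)"
    unfolding Z2 by (intro Bochner_Integration.integrable_sum WWint) (auto simp: I_def)
  have EZ2: "expectation (\<lambda>x. (Z x)\<^sup>2) = (\<Sum>i\<in>I. \<Sum>j\<in>I. expectation (\<lambda>x. W i x * W j x))"
    unfolding Z2 by (subst Bochner_Integration.integral_sum, (auto intro!: Bochner_Integration.integrable_sum WWint simp: I_def)[1],
      intro sum.cong refl Bochner_Integration.integral_sum) (auto intro!: WWint simp: I_def)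
  have EW: "expectation (W i) = m i" if "i \<ge> 1" for i
    using Yint[OF that] by (simp add: W_def[abs_def] m_def prob_space)
  have indepW: "indep_vars (\<lambda>_. borel) W {1..}"
  proof -
    have "indep_vars (\<lambda>_. borel) (\<lambda>i x. (\<lambda>y. (if \<bar>y\<bar> \<le> T then y else 0) - \<mu> i) (\<xi> i x)) {1..}"
      by (rule indep_vars_compose2[OF indep]) measurable
    then show ?thesis by (simp add: W_def[abs_def] Y_def[abs_def])
  qed
  have pair: "expectation (\<lambda>x. W i x * W j x) \<le> (if i = j then expectation (\<lambda>x. Y i x * Y i x) else 0) + \<bar>m i\<bar> * \<bar>m j\<bar>"
    if ij: "i \<in> I" "j \<in> I" for i j
  proof (cases "i = j")
    case True
    have i1: "i \<ge> 1" using I1 ij by auto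
    have eq: "(\<lambda>x. W i x * W i x) = (\<lambda>x. Y i x * Y i x - 2 * \<mu> i * Y i x + \<mu> i * \<mu> i)"
      by (auto simp: W_def algebra_simps)
    have YYint: "integrable M (\<lambda>x. Y i x * Y i x)"
    proof (rule integrable_const_bound[where B="T * T"])
      show "AE x in M. norm (Y i x * Y i x) \<le> T * T"
      proof (rule AE_I2)
        fix x show "norm (Y i x * Y i x) \<le> T * T"
          using mult_mono[OF Yb[of i x] Yb[of i x]] T by (auto simp: abs_mult)
      qed
    qed (use i1 in auto)
    have "expectation (\<lambda>x. W i x * W i x) = expectation (\<lambda>x. Y i x * Y i x) - 2 * \<mu> i * expectation (Y i) + \<mu> i * \<mu> i"
      unfolding eq using YYint Yint[OF i1] by (simp add: prob_space)
    also have "\<dots> \<le> expectation (\<lambda>x. Y i x * Y i x) + \<bar>m i\<bar> * \<bar>m i\<bar>"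
    proof -
      have "0 \<le> (expectation (Y i))\<^sup>2" by simp
      then show ?thesis by (simp add: m_def power2_eq_square algebra_simps abs_mult_self_eq)
    qed
    finally show ?thesis using True by simp
  next
    case False
    have i1: "i \<ge> 1" "j \<ge> 1" using I1 ij by auto
    have ind2: "indep_vars (\<lambda>_. borel) W {i, j}"
      by (rule indep_vars_subset[OF indepW]) (use i1 in auto)
    have "expectation (\<lambda>x. \<Prod>k\<in>{i,j}. W k x) = (\<Prod>k\<in>{i,j}. expectation (W k))"
      by (rule indep_vars_lebesgue_integral[OF _ ind2]) (use i1 Wint in auto)
    then have "expectation (\<lambda>x. W i x * W j x) = m i * m j"
      using False i1 by (simp add: EW)
    also have "\<dots> \<le> \<bar>m i\<bar> * \<bar>m j\<bar>" by (simp add: abs_mult[symmetric])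
    finally show ?thesis using False by simp
  qed
  have a_le: "expectation (\<lambda>x. Y i x * Y i x) \<le> E2" if "i \<in> I" for i
  proof -
    have "(\<lambda>x. Y i x * Y i x) = (\<lambda>x. if \<bar>\<xi> i x\<bar> \<le> T then (\<xi> i x)\<^sup>2 else 0)"
      by (auto simp: Y_def power2_eq_square)
    then show ?thesis using m2[of i] I1[OF that] by simp
  qed
  have m_le: "\<bar>m i\<bar> \<le> E1" if "i \<in> I" for i
  proof -
    have i1: "i \<ge> 1" using I1 that by auto
    have \<xi>int: "integrable M (\<xi> i)" using int i1 by auto
    have "m i = expectation (\<lambda>x. Y i x - \<xi> i x)"
      using Yint[OF i1] \<xi>int by (simp add: m_def \<mu>_def)
    also have "\<bar>\<dots>\<bar> \<le> expectation (\<lambda>x. \<bar>Y i x - \<xi> i x\<bar>)"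
      by (rule integral_abs_bound)
    also have "(\<lambda>x. \<bar>Y i x - \<xi> i x\<bar>) = (\<lambda>x. if T < \<bar>\<xi> i x\<bar> then \<bar>\<xi> i x\<bar> else 0)"
      by (auto simp: Y_def)
    also have "expectation \<dots> \<le> E1" using m1[OF i1] .
    finally show ?thesis .
  qed
  have "prob {x\<in>space M. T\<^sup>2 \<le> (Z x)\<^sup>2} \<le> expectation (\<lambda>x. (Z x)\<^sup>2) / T\<^sup>2"
    by (rule integral_Markov_inequality_measure[OF Z2int]) (use T in auto)
  also have "expectation (\<lambda>x. (Z x)\<^sup>2) \<le> (\<Sum>i\<in>I. \<Sum>j\<in>I. (if i = j then expectation (\<lambda>x. Y i x * Y i x) else 0) + \<bar>m i\<bar> * \<bar>m j\<bar>)"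
    unfolding EZ2 by (intro sum_mono pair)
  also have "\<dots> = (\<Sum>i\<in>I. expectation (\<lambda>x. Y i x * Y i x)) + (\<Sum>i\<in>I. \<bar>m i\<bar>)\<^sup>2"
    by (simp add: sum.distrib power2_eq_square sum_product I_def)
  also have "\<dots> \<le> real n * E2 + (real n * E1)\<^sup>2"
  proof (intro add_mono power_mono)
    show "(\<Sum>i\<in>I. expectation (\<lambda>x. Y i x * Y i x)) \<le> real n * E2"
      using sum_mono[of I _ "\<lambda>_. E2", OF a_le] by (simp add: I_def)
    show "(\<Sum>i\<in>I. \<bar>m i\<bar>) \<le> real n * E1"
      using sum_mono[of I _ "\<lambda>_. E1", OF m_le] by (simp add: I_def)
  qed (auto intro: sum_nonneg)
  finally have "prob {x\<in>space M. T\<^sup>2 \<le> (Z x)\<^sup>2} \<le> (real n * E2 + (real n * E1)\<^sup>2) / T\<^sup>2"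
    using T by (simp add: divide_right_mono)
  then show ?thesis by (simp add: Z_def W_def Y_def \<mu>_def I_def)
qed

end


theorem proposition2p1:
  fixes M :: "'a measure" and \<xi> :: "nat \<Rightarrow> 'a \<Rightarrow> real"
    and L g :: "real \<Rightarrow> real" and \<alpha> :: real
  assumes "prob_space M"
    and "1 < \<alpha>" and "\<alpha> < 2"
    and "slowly_varying L" and "locally_bounded_away L"
    and "\<And>i. i \<ge> 1 \<Longrightarrow> \<xi> i \<in> borel_measurable M"
    and "prob_space.indep_vars M (\<lambda>_. borel) \<xi> {1..}"
    and "\<And>i. i \<ge> 1 \<Longrightarrow> distr M borel (\<xi> i) = distr M borel (\<xi> 1)"
    and "\<And>t. t \<ge> 1 \<Longrightarrow> measure M {x \<in> space M. \<bar>\<xi> 1 x\<bar> \<ge> t} \<le> t powr (-\<alpha>) * L t"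
    and "asymptotic_inverse (\<lambda>t. t powr \<alpha> / L t) g"
    and "mono_on {0<..} g"
  shows "(\<forall>\<rho><\<alpha>. \<exists>C::real. \<forall>n::nat\<ge>1. \<forall>lam::real\<ge>1.
            measure M {x \<in> space M.
              \<bar>\<Sum>i=1..n. (\<xi> i x - integral\<^sup>L M (\<xi> i)) / g (real n)\<bar> > lam}
            \<le> C * lam powr (-\<rho>))
       \<and> (\<forall>\<epsilon>>0. \<exists>K::real. \<forall>n::nat\<ge>1.
            measure M {x \<in> space M.
              \<bar>(\<Sum>i=1..n. \<xi> i x) - real n * integral\<^sup>L M (\<xi> 1)\<bar> / g (real n) > K} < \<epsilon>)"
proof -
  interpret prob_space M by (rule assms(1))
  have a1: "1 < \<alpha>" and a2: "\<alpha> < 2" using assms(2,3) .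
  have sv: "slowly_varying L" and lb: "locally_bounded_away L" using assms(4,5) .
  have \<xi>m[measurable]: "\<And>i. i \<ge> 1 \<Longrightarrow> \<xi> i \<in> borel_measurable M" using assms(6) .
  have indep: "indep_vars (\<lambda>_. borel) \<xi> {1..}" using assms(7) .
  have dist: "\<And>i. i \<ge> 1 \<Longrightarrow> distr M borel (\<xi> i) = distr M borel (\<xi> 1)" using assms(8) .
  have tail1: "\<And>t. t \<ge> 1 \<Longrightarrow> prob {x \<in> space M. t \<le> \<bar>\<xi> 1 x\<bar>} \<le> t powr (-\<alpha>) * L t" using assms(9) .
  have ai: "asymptotic_inverse (\<lambda>t. t powr \<alpha> / L t) g" using assms(10) .
  have Lpos: "\<And>t. t > 0 \<Longrightarrow> L t > 0" using sv unfolding slowly_varying_def by auto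
  have gpos: "\<And>t. t > 0 \<Longrightarrow> g t > 0" using ai unfolding asymptotic_inverse_def by auto
  obtain c1 C1 where c1: "c1 > 0" and c1L: "\<And>t. t \<in> {0..1} \<Longrightarrow> c1 \<le> L t \<and> L t \<le> C1"
    using lb unfolding locally_bounded_away_def by (meson zero_le_one)
  define K where "K = max 1 (1 / c1)"
  have K1: "K \<ge> 1" and Kc: "K \<ge> 1 / c1" by (auto simp: K_def)
  have probeq: "prob {x\<in>space M. t \<le> \<bar>\<xi> i x\<bar>} = prob {x\<in>space M. t \<le> \<bar>\<xi> 1 x\<bar>}" if i: "i \<ge> 1" for i t
  proof -
    have "measure (distr M borel (\<xi> j)) {y. t \<le> \<bar>y\<bar>} = prob {x\<in>space M. t \<le> \<bar>\<xi> j x\<bar>}" if "j \<ge> 1" for j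
      using that by (subst measure_distr) (auto intro!: arg_cong[where f=prob])
    from this[of i] this[of 1] dist[OF i] i show ?thesis by simp
  qed
  have tail: "prob {x\<in>space M. t \<le> \<bar>\<xi> i x\<bar>} \<le> K * t powr (-\<alpha>) * L t" if i: "i \<ge> 1" and t: "t > 0" for i t
  proof (cases "t \<ge> 1")
    case True
    have "prob {x\<in>space M. t \<le> \<bar>\<xi> i x\<bar>} \<le> t powr (-\<alpha>) * L t" using tail1[OF True] probeq[OF i] by simp
    also have "\<dots> \<le> K * (t powr (-\<alpha>) * L t)"
      using K1 Lpos[OF t] by (intro mult_right_mono[of 1 K, simplified]) auto
    finally show ?thesis by (simp add: mult.assoc)
  next
    case False
    have tp: "t powr (-\<alpha>) \<ge> 1"
    proof -
      have "t powr \<alpha> \<le> 1" using False t a1 by (intro powr_le1) auto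
      moreover have "t powr \<alpha> > 0" using t by simp
      ultimately show ?thesis by (simp add: powr_minus field_simps)
    qed
    have Lt: "L t \<ge> c1" using c1L[of t] t False by auto
    have "1 = (1 / c1) * 1 * c1" using c1 by simp
    also have "\<dots> \<le> K * t powr (-\<alpha>) * L t"
      using Kc tp Lt c1 K1 by (intro mult_mono) auto
    finally show ?thesis using prob_le_1 by (rule order_trans[rotated])
  qed
  obtain B where B0: "B \<ge> 0" and Bn: "\<And>n::nat. n \<ge> 1 \<Longrightarrow> real n * L (g (real n)) \<le> B * (g (real n)) powr \<alpha>"
  proof -
    have eq: "(\<lambda>t. (g t) powr \<alpha> / L (g t)) \<sim>[at_top] (\<lambda>t. t)"
      using ai unfolding asymptotic_inverse_def by auto
    have "((\<lambda>t. if (g t) powr \<alpha> / L (g t) = 0 \<and> t = 0 then 1 else ((g t) powr \<alpha> / L (g t)) / t) \<longlongrightarrow> 1) at_top"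
      using asymp_equivD[OF eq] .
    then have ev1: "eventually (\<lambda>t. 1/2 < (if (g t) powr \<alpha> / L (g t) = 0 \<and> t = 0 then 1 else ((g t) powr \<alpha> / L (g t)) / t)) at_top"
      by (rule order_tendstoD(1)) simp
    have "eventually (\<lambda>t. t > 0 \<and> 1/2 < ((g t) powr \<alpha> / L (g t)) / t) at_top"
      using ev1 eventually_gt_at_top[of 0] by eventually_elim auto
    then obtain T0 where T0: "\<And>t. t \<ge> T0 \<Longrightarrow> t > 0 \<and> 1/2 < ((g t) powr \<alpha> / L (g t)) / t"
      by (auto simp: eventually_at_top_linorder)
    define S where "S = {n::nat. 1 \<le> n \<and> real n < T0}"
    have finS: "finite S"
    proof (rule finite_subset)
      show "S \<subseteq> {..nat \<lceil>T0\<rceil>}" by (auto simp: S_def) linarith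
    qed simp
    define B where "B = 2 + (\<Sum>n\<in>S. real n * L (g (real n)) / (g (real n)) powr \<alpha>)"
    have tnn: "real n * L (g (real n)) / (g (real n)) powr \<alpha> \<ge> 0" if "n \<ge> 1" for n :: nat
      using Lpos[OF gpos, of "real n"] that by simp
    have sum_nn: "(\<Sum>n\<in>S. real n * L (g (real n)) / (g (real n)) powr \<alpha>) \<ge> 0"
      by (intro sum_nonneg) (auto simp: S_def intro!: tnn)
    have "B \<ge> 0" using sum_nn by (simp add: B_def)
    moreover have "real n * L (g (real n)) \<le> B * (g (real n)) powr \<alpha>" if n: "n \<ge> 1" for n :: nat
    proof -
      have gp: "g (real n) > 0" using gpos n by simp
      have Lp: "L (g (real n)) > 0" using Lpos[OF gp] .
      have pp: "(g (real n)) powr \<alpha> > 0" using gp by simp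
      show ?thesis
      proof (cases "real n \<ge> T0")
        case True
        from T0[OF True] have "1/2 < ((g (real n)) powr \<alpha> / L (g (real n))) / real n" by simp
        then have "real n * L (g (real n)) < 2 * (g (real n)) powr \<alpha>"
          using Lp n by (simp add: field_simps)
        also have "\<dots> \<le> B * (g (real n)) powr \<alpha>"
          using sum_nn pp by (intro mult_right_mono) (auto simp: B_def)
        finally show ?thesis by simp
      next
        case False
        then have nS: "n \<in> S" using n by (auto simp: S_def)
        have "real n * L (g (real n)) / (g (real n)) powr \<alpha> \<le> (\<Sum>n\<in>S. real n * L (g (real n)) / (g (real n)) powr \<alpha>)"
          by (rule member_le_sum[OF nS _ finS]) (auto simp: S_def intro!: tnn)
        also have "\<dots> \<le> B" by (simp add: B_def)
        finally show ?thesis using pp by (simp add: field_simps)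
      qed
    qed
    ultimately show ?thesis using that by blast
  qed
  have part1: "\<exists>C::real. \<forall>n::nat\<ge>1. \<forall>lam::real\<ge>1.
            prob {x \<in> space M.
              \<bar>\<Sum>i=1..n. (\<xi> i x - expectation (\<xi> i)) / g (real n)\<bar> > lam}
            \<le> C * lam powr (-\<rho>)" if \<rho>: "\<rho> < \<alpha>" for \<rho>
  proof -
    define d where "d = min (\<alpha> - \<rho>) (min ((2 - \<alpha>) / 2) ((\<alpha> - 1) / 2))"
    have dd: "d \<le> \<alpha> - \<rho>" "d \<le> (2 - \<alpha>) / 2" "d \<le> (\<alpha> - 1) / 2"
      unfolding d_def by (rule min.cobounded1, rule min.coboundedI2, rule min.cobounded1, rule min.coboundedI2, rule min.cobounded2)
    have d0: "d > 0" using \<rho> a1 a2 by (simp add: d_def)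
    have d1: "d \<le> \<alpha> - \<rho>" using dd by linarith
    have ad1: "1 < \<alpha> - d" using dd a1 a2 by (auto simp: field_simps)
    have ad2: "\<alpha> + d < 2" using dd a1 a2 by (auto simp: field_simps)
    obtain A where A: "A > 0" and pot: "\<And>t s. t > 0 \<Longrightarrow> s \<ge> 1 \<Longrightarrow> L (t * s) \<le> A * s powr d * L t \<and> L t \<le> A * s powr d * L (t * s)"
      using potter_global[OF sv lb d0] by blast
    define D1 where "D1 = 2*K*A / (1 - 2 powr (1 - \<alpha> + d))"
    define D2 where "D2 = K*A*2 powr (\<alpha>+d) / (1 - 2 powr (\<alpha>+d-2))"
    have r2: "2 powr (\<alpha>+d-2) < (1::real)" using ad2 powr_less_mono[of "\<alpha> + d - 2" 0 2] by auto
    have D2: "D2 \<ge> 0" using r2 K1 A by (auto simp: D2_def)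
    have K0: "K \<ge> 0" using K1 by simp
    note tm = tail_moments[OF \<xi>m tail Lpos pot K0 A ad1 ad2]
    have int: "\<And>i. i \<ge> 1 \<Longrightarrow> integrable M (\<xi> i)" using tm(1) by blast
    have m1: "\<And>i T. i \<ge> 1 \<Longrightarrow> T > 0 \<Longrightarrow> expectation (\<lambda>x. if T < \<bar>\<xi> i x\<bar> then \<bar>\<xi> i x\<bar> else 0) \<le> D1 * T powr (1-\<alpha>) * L T"
      using tm(2) unfolding D1_def by blast
    have m2: "\<And>i T. i \<ge> 1 \<Longrightarrow> T > 0 \<Longrightarrow> expectation (\<lambda>x. if \<bar>\<xi> i x\<bar> \<le> T then (\<xi> i x)\<^sup>2 else 0) \<le> D2 * T powr (2-\<alpha>) * L T"
      using tm(3) unfolding D2_def by blast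
    define C where "C = (K + D2 + D1\<^sup>2 * (A * B)) * (A * B)"
    have "prob {x \<in> space M. \<bar>\<Sum>i=1..n. (\<xi> i x - expectation (\<xi> i)) / g (real n)\<bar> > lam} \<le> C * lam powr (-\<rho>)"
      if n: "n \<ge> 1" and lam: "lam \<ge> 1" for n :: nat and lam :: real
    proof -
      define a where "a = g (real n)"
      have a: "a > 0" using gpos n by (simp add: a_def)
      define T where "T = a * lam"
      have T: "T > 0" using a lam by (simp add: T_def)
      define Q where "Q = real n * T powr (-\<alpha>) * L T"
      have LT: "L T > 0" using Lpos[OF T] .
      have Q0: "Q \<ge> 0" using LT by (simp add: Q_def)
      have Qb: "Q \<le> A * B * lam powr (d - \<alpha>)"
      proof -
        have LTb: "L T \<le> A * lam powr d * L a" using pot[OF a lam] by (simp add: T_def)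
        have "Q = real n * a powr (-\<alpha>) * lam powr (-\<alpha>) * L T"
          using a lam by (simp add: Q_def T_def powr_mult)
        also have "\<dots> \<le> real n * a powr (-\<alpha>) * lam powr (-\<alpha>) * (A * lam powr d * L a)"
          using LTb by (intro mult_left_mono) auto
        also have "\<dots> = A * lam powr (d - \<alpha>) * (real n * L a * a powr (-\<alpha>))"
          by (simp add: powr_diff powr_minus field_simps)
        also have "real n * L a * a powr (-\<alpha>) \<le> B"
        proof -
          have "real n * L a \<le> B * a powr \<alpha>" using Bn[OF n] by (simp add: a_def)
          then have "real n * L a * a powr (-\<alpha>) \<le> B * a powr \<alpha> * a powr (-\<alpha>)"
            by (intro mult_right_mono) auto
          also have "\<dots> = B" using a by (simp add: powr_minus)
          finally show ?thesis .
        qed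
        then have "A * lam powr (d - \<alpha>) * (real n * L a * a powr (-\<alpha>)) \<le> A * lam powr (d - \<alpha>) * B"
          using A by (intro mult_left_mono) auto
        finally show ?thesis by (simp add: algebra_simps)
      qed
      have AB: "A * B \<ge> 0" using A B0 by simp
      have lp1: "lam powr (d - \<alpha>) \<le> 1" using powr_mono[of "d - \<alpha>" 0 lam] lam ad1 by simp
      have lp2: "lam powr (d - \<alpha>) \<le> lam powr (-\<rho>)" using powr_mono[of "d - \<alpha>" "-\<rho>" lam] lam d1 by simp
      have Q1: "Q \<le> A * B * lam powr (-\<rho>)" using Qb mult_left_mono[OF lp2 AB] by linarith
      have Q2: "Q \<le> A * B" using Qb mult_left_mono[OF lp1 AB] by linarith
      define E1 where "E1 = D1 * T powr (1-\<alpha>) * L T"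
      define E2 where "E2 = D2 * T powr (2-\<alpha>) * L T"
      have sb: "prob {x\<in>space M. T\<^sup>2 \<le> (\<Sum>i=1..n. (if \<bar>\<xi> i x\<bar> \<le> T then \<xi> i x else 0) - expectation (\<xi> i))\<^sup>2}
         \<le> (real n * E2 + (real n * E1)\<^sup>2) / T\<^sup>2"
        by (rule sum_bound[OF \<xi>m indep int]) (use m1[OF _ T] m2[OF _ T] T in \<open>auto simp: E1_def E2_def\<close>)
      have sbeq: "(real n * E2 + (real n * E1)\<^sup>2) / T\<^sup>2 = D2 * Q + (D1 * Q)\<^sup>2"
      proof -
        have p2: "T powr (2 - \<alpha>) = T\<^sup>2 * T powr (-\<alpha>)" using T by (simp add: powr_diff powr_minus field_simps)
        have p1: "T powr (1 - \<alpha>) = T * T powr (-\<alpha>)" using T by (simp add: powr_diff powr_minus field_simps)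
        show ?thesis using T by (simp add: E1_def E2_def Q_def p1 p2 power2_eq_square field_simps)
      qed
      let ?S = "{x \<in> space M. \<bar>\<Sum>i=1..n. (\<xi> i x - expectation (\<xi> i)) / g (real n)\<bar> > lam}"
      let ?U = "\<lambda>i. {x\<in>space M. T \<le> \<bar>\<xi> i x\<bar>}"
      let ?V = "{x\<in>space M. T\<^sup>2 \<le> (\<Sum>i=1..n. (if \<bar>\<xi> i x\<bar> \<le> T then \<xi> i x else 0) - expectation (\<xi> i))\<^sup>2}"
      have sub: "?S \<subseteq> (\<Union>i\<in>{1..n}. ?U i) \<union> ?V"
      proof
        fix x assume x: "x \<in> ?S"
        show "x \<in> (\<Union>i\<in>{1..n}. ?U i) \<union> ?V"
        proof (cases "\<exists>i\<in>{1..n}. T \<le> \<bar>\<xi> i x\<bar>")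
          case True then show ?thesis using x by auto
        next
          case False
          then have eqs: "(\<Sum>i=1..n. (if \<bar>\<xi> i x\<bar> \<le> T then \<xi> i x else 0) - expectation (\<xi> i)) = (\<Sum>i=1..n. \<xi> i x - expectation (\<xi> i))"
          proof (intro sum.cong refl)
            fix i assume i: "i \<in> {1..n}"
            have "\<not> T \<le> \<bar>\<xi> i x\<bar>" using False i by blast
            then have "\<bar>\<xi> i x\<bar> < T" by (simp add: not_le)
            then show "(if \<bar>\<xi> i x\<bar> \<le> T then \<xi> i x else 0) - expectation (\<xi> i) = \<xi> i x - expectation (\<xi> i)" by auto
          qed
          have "lam < \<bar>(\<Sum>i=1..n. \<xi> i x - expectation (\<xi> i)) / a\<bar>"
            using x by (simp add: a_def sum_divide_distrib)
          then have "lam * a < \<bar>\<Sum>i=1..n. \<xi> i x - expectation (\<xi> i)\<bar>"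
            using a by (simp add: field_simps)
          then have "T < \<bar>\<Sum>i=1..n. \<xi> i x - expectation (\<xi> i)\<bar>" by (simp add: T_def mult.commute)
          then have "T\<^sup>2 \<le> (\<Sum>i=1..n. \<xi> i x - expectation (\<xi> i))\<^sup>2"
            using T by (simp add: abs_le_square_iff[symmetric])
          then show ?thesis using x eqs by auto
        qed
      qed
      have "prob ?S \<le> prob ((\<Union>i\<in>{1..n}. ?U i) \<union> ?V)"
        by (rule finite_measure_mono[OF sub]) (use \<xi>m in auto)
      also have "\<dots> \<le> prob (\<Union>i\<in>{1..n}. ?U i) + prob ?V"
        by (rule measure_Un_le) (use \<xi>m in auto)
      also have "prob (\<Union>i\<in>{1..n}. ?U i) \<le> (\<Sum>i\<in>{1..n}. prob (?U i))"
        by (rule finite_measure_subadditive_finite) (use \<xi>m in auto)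
      also have "\<dots> \<le> (\<Sum>i\<in>{1..n}. K * T powr (-\<alpha>) * L T)"
        by (intro sum_mono tail T) auto
      also have "\<dots> = K * Q" by (simp add: Q_def)
      also note sb
      also note sbeq
      finally have "prob ?S \<le> K * Q + D2 * Q + (D1 * Q)\<^sup>2" by simp
      also have "\<dots> \<le> (K + D2 + D1\<^sup>2 * (A * B)) * Q"
      proof -
        have "Q * Q \<le> A * B * Q" using mult_right_mono[OF Q2 Q0] .
        then have "(D1 * Q)\<^sup>2 \<le> D1\<^sup>2 * (A * B) * Q"
          using mult_left_mono[of "Q*Q" "A*B*Q" "D1\<^sup>2"] by (simp add: power2_eq_square algebra_simps)
        then show ?thesis by (simp add: algebra_simps)
      qed
      also have "\<dots> \<le> (K + D2 + D1\<^sup>2 * (A * B)) * (A * B * lam powr (-\<rho>))"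
        using K0 D2 AB Q1 by (intro mult_left_mono) auto
      also have "\<dots> = C * lam powr (-\<rho>)" by (simp add: C_def)
      finally show ?thesis .
    qed
    then show ?thesis by blast
  qed
  have mueq: "expectation (\<xi> i) = expectation (\<xi> 1)" if i: "i \<ge> 1" for i
  proof -
    have "integral\<^sup>L (distr M borel (\<xi> j)) (\<lambda>y. y) = expectation (\<xi> j)" if "j \<ge> 1" for j
      using that by (subst integral_distr) auto
    from this[of i] this[of 1] dist[OF i] i show ?thesis by simp
  qed
  have part2: "\<exists>K::real. \<forall>n::nat\<ge>1.
            prob {x \<in> space M.
              \<bar>(\<Sum>i=1..n. \<xi> i x) - real n * expectation (\<xi> 1)\<bar> / g (real n) > K} < \<epsilon>" if e: "\<epsilon> > 0" for \<epsilon>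
  proof -
    obtain C where C: "\<And>n lam. n \<ge> (1::nat) \<Longrightarrow> lam \<ge> 1 \<Longrightarrow>
            prob {x \<in> space M. \<bar>\<Sum>i=1..n. (\<xi> i x - expectation (\<xi> i)) / g (real n)\<bar> > lam}
            \<le> C * lam powr (-1)"
      using part1[of 1] a1 by auto
    define K' where "K' = max 1 (\<bar>C\<bar> / \<epsilon> + 1)"
    have K'1: "K' \<ge> 1" by (simp add: K'_def)
    have K'2: "\<bar>C\<bar> < \<epsilon> * K'"
    proof -
      have "\<bar>C\<bar> / \<epsilon> + 1 \<le> K'" by (simp add: K'_def)
      then have "\<bar>C\<bar> + \<epsilon> \<le> \<epsilon> * K'" using e by (simp add: field_simps)
      then show ?thesis using e by linarith
    qed
    have "prob {x \<in> space M. \<bar>(\<Sum>i=1..n. \<xi> i x) - real n * expectation (\<xi> 1)\<bar> / g (real n) > K'} < \<epsilon>"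
      if n: "n \<ge> 1" for n :: nat
    proof -
      have a: "g (real n) > 0" using gpos n by simp
      have "{x \<in> space M. \<bar>(\<Sum>i=1..n. \<xi> i x) - real n * expectation (\<xi> 1)\<bar> / g (real n) > K'}
          = {x \<in> space M. \<bar>\<Sum>i=1..n. (\<xi> i x - expectation (\<xi> i)) / g (real n)\<bar> > K'}"
      proof -
        have "(\<Sum>i=1..n. (\<xi> i x - expectation (\<xi> i)) / g (real n))
              = ((\<Sum>i=1..n. \<xi> i x) - real n * expectation (\<xi> 1)) / g (real n)" for x
        proof -
          have "(\<Sum>i=1..n. expectation (\<xi> i)) = (\<Sum>i=1..n. expectation (\<xi> 1))"
          proof (intro sum.cong refl)
            fix i assume "i \<in> {1..n}"
            then have "i \<ge> 1" by simp
            then show "expectation (\<xi> i) = expectation (\<xi> 1)" by (rule mueq)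
          qed
          then show ?thesis by (simp add: sum_divide_distrib[symmetric] sum_subtractf)
        qed
        then show ?thesis using a by (simp add: abs_div)
      qed
      also have "prob \<dots> \<le> C * K' powr (-1)" using C[OF n K'1] .
      also have "\<dots> \<le> \<bar>C\<bar> / K'" using K'1 by (simp add: powr_minus divide_inverse)
      also have "\<dots> < \<epsilon>" using K'2 K'1 by (simp add: field_simps)
      finally show ?thesis .
    qed
    then show ?thesis by blast
  qed
  show ?thesis using part1 part2 by blast
qed

end
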